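(* For every $k\ge1$, $\mathfrak{L}(\mathbb{Z}^k)^w_{O(n)} \subsetneq \mathfrak{L}(\mathbb{Z}^{k+1})^w_{O(n)}$.
   Context: For a group $G$ with identity $e$, a $G$-automaton is a tuple $(Q,\Sigma,G,\delta,q_0,Q_a)$ where $Q$ is a finite set of states, $\Sigma$ a finite input alphabet, $q_0\in Q$ the initial state, $Q_a\subseteq Q$ the accepting states, and $\delta$ assigns to each $(q,\sigma)\in Q\times(\Sigma\cup\{\varepsilon\})$ a finite set of pairs $(q',m)\in Q\times G$. The register holds an element of $G$, initially $e$; using a transition $(q',m)\in\delta(q,\sigma)$ (one step) the automaton reads $\sigma$ (or nothing), moves to $q'$ and replaces the register content $x$ by $xm$. A word is accepted if some computation reads it entirely and ends in an accepting state with register equal to $e$. A $G$-automaton recognizing $\mathtt{L}$ is weakly $t(n)$ time-bounded if every $x\in\mathtt{L}$ with $|x|=n$ has an accepting computation of at most $t(n)$ steps; $\mathfrak{L}(G)^w_{O(n)}$ is the class of languages recognized by weakly $t(n)$ time-bounded $G$-automata for some $t(n)=O(n)$. $\mathbb{Z}^k$ is the additive group of integer vectors of dimension $k$. *)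

theory Defs
  imports Main
begin

text \<open>Elements of the group Z^k are represented as functions nat => int that
vanish outside the index range {0..<k}; the group operation is pointwise addition
and the identity is the zero function.\<close>

definition Zvec :: "nat \<Rightarrow> (nat \<Rightarrow> int) set" where
  "Zvec k = {v. \<forall>i\<ge>k. v i = 0}"

definition vadd :: "(nat \<Rightarrow> int) \<Rightarrow> (nat \<Rightarrow> int) \<Rightarrow> (nat \<Rightarrow> int)" where
  "vadd x m = (\<lambda>i. x i + m i)"

definition vzero :: "nat \<Rightarrow> int" where
  "vzero = (\<lambda>i. 0)"

text \<open>A Z^k-automaton (Q, Sigma, Z^k, delta, q0, Qa). States are natural numbers,
input letters are natural numbers (so any finite alphabet can be encoded),
and the epsilon label is None.\<close>

record zaut =
  states :: "nat set"
  alpha :: "nat set"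
  delta :: "nat \<Rightarrow> nat option \<Rightarrow> (nat \<times> (nat \<Rightarrow> int)) set"
  init :: nat
  acc :: "nat set"

definition is_Zk_automaton :: "nat \<Rightarrow> zaut \<Rightarrow> bool" where
  "is_Zk_automaton k A \<longleftrightarrow>
     finite (states A) \<and> finite (alpha A) \<and>
     init A \<in> states A \<and> acc A \<subseteq> states A \<and>
     (\<forall>q s. finite (delta A q s) \<and> delta A q s \<subseteq> states A \<times> Zvec k) \<and>
     (\<forall>q s. (q \<notin> states A \<or> (\<exists>a. s = Some a \<and> a \<notin> alpha A)) \<longrightarrow> delta A q s = {})"

inductive run :: "zaut \<Rightarrow> nat \<Rightarrow> (nat \<Rightarrow> int) \<Rightarrow> nat list \<Rightarrow> nat \<Rightarrow> (nat \<Rightarrow> int) \<Rightarrow> nat \<Rightarrow> bool"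
  for A where
  run_nil: "run A q x [] q x 0"
| run_read: "(p, m) \<in> delta A q (Some a) \<Longrightarrow> run A p (vadd x m) w q' y t
              \<Longrightarrow> run A q x (a # w) q' y (Suc t)"
| run_eps: "(p, m) \<in> delta A q None \<Longrightarrow> run A p (vadd x m) w q' y t
              \<Longrightarrow> run A q x w q' y (Suc t)"

definition accepts_in :: "zaut \<Rightarrow> nat list \<Rightarrow> nat \<Rightarrow> bool" where
  "accepts_in A w t \<longleftrightarrow> (\<exists>q. q \<in> acc A \<and> run A (init A) vzero w q vzero t)"

definition lang :: "zaut \<Rightarrow> nat list set" where
  "lang A = {w. \<exists>t. accepts_in A w t}"

definition weakly_time_bounded :: "zaut \<Rightarrow> (nat \<Rightarrow> nat) \<Rightarrow> bool" where
  "weakly_time_bounded A f \<longleftrightarrow>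
     (\<forall>w \<in> lang A. \<exists>t. t \<le> f (length w) \<and> accepts_in A w t)"

definition ZkLinLangs :: "nat \<Rightarrow> nat list set set" where
  "ZkLinLangs k = {L. \<exists>A f. is_Zk_automaton k A \<and> lang A = L \<and>
       (\<exists>c N. \<forall>n\<ge>N. f n \<le> c * n) \<and> weakly_time_bounded A f}"

end

theory Submission
  imports Defs
begin

lemma run_append:
  "run A q x u p z t1 \<Longrightarrow> run A p z v q' y t2 \<Longrightarrow> run A q x (u @ v) q' y (t1 + t2)"
  by (induction rule: run.induct) (auto intro: run.intros)

lemma run_split:
  "run A q x w q' y t \<Longrightarrow> w = u @ v \<Longrightarrow>
   \<exists>p z t1 t2. run A q x u p z t1 \<and> run A p z v q' y t2 \<and> t = t1 + t2"
proof (induction arbitrary: u rule: run.induct)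
  case (run_nil q x)
  then show ?case by (auto intro: run.intros)
next
  case (run_read p m q a x w q' y t)
  show ?case
  proof (cases u)
    case Nil
    then show ?thesis using run_read by (metis add_0 append_Nil run.run_nil run.run_read)
  next
    case (Cons b u')
    then have "b = a" "w = u' @ v" using run_read by auto
    then obtain p2 z t1 t2 where "run A p (vadd x m) u' p2 z t1" "run A p2 z v q' y t2" "t = t1 + t2"
      using run_read by blast
    then show ?thesis using Cons \<open>b = a\<close> run_read(1)
      by (metis add_Suc run.run_read)
  qed
next
  case (run_eps p m q x w q' y t)
  then obtain p2 z t1 t2 where "run A p (vadd x m) u p2 z t1" "run A p2 z v q' y t2" "t = t1 + t2"
    by blast
  then show ?case using run_eps(1) by (metis add_Suc run.run_eps)
qed

lemma run_bound:
  assumes "\<And>q s p m i. (p, m) \<in> delta A q s \<Longrightarrow> \<bar>m i\<bar> \<le> int M"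
  shows "run A q x w q' y t \<Longrightarrow> \<bar>y i - x i\<bar> \<le> int M * int t"
proof (induction rule: run.induct)
  case (run_nil q x)
  then show ?case by simp
next
  case (run_read p m q a x w q' y t)
  have "\<bar>m i\<bar> \<le> int M" using assms run_read(1) by blast
  then show ?case using run_read(3) by (simp add: vadd_def algebra_simps)
next
  case (run_eps p m q x w q' y t)
  have "\<bar>m i\<bar> \<le> int M" using assms run_eps(1) by blast
  then show ?case using run_eps(3) by (simp add: vadd_def algebra_simps)
qed

lemma run_zvec:
  assumes "\<And>q s p m. (p, m) \<in> delta A q s \<Longrightarrow> m \<in> Zvec k"
  shows "run A q x w q' y t \<Longrightarrow> x \<in> Zvec k \<Longrightarrow> y \<in> Zvec k"
proof (induction rule: run.induct)
  case (run_nil q x)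
  then show ?case by simp
next
  case (run_read p m q a x w q' y t)
  then show ?case using assms[OF run_read(1)] by (simp add: vadd_def Zvec_def)
next
  case (run_eps p m q x w q' y t)
  then show ?case using assms[OF run_eps(1)] by (simp add: vadd_def Zvec_def)
qed

lemma run_states:
  assumes "is_Zk_automaton k A"
  shows "run A q x w q' y t \<Longrightarrow> q \<in> states A \<Longrightarrow> q' \<in> states A"
proof (induction rule: run.induct)
  case (run_nil q x)
  then show ?case by simp
next
  case (run_read p m q a x w q' y t)
  then show ?case using assms unfolding is_Zk_automaton_def by blast
next
  case (run_eps p m q x w q' y t)
  then show ?case using assms unfolding is_Zk_automaton_def by blast
qed

definition unitv :: "nat \<Rightarrow> int \<Rightarrow> nat \<Rightarrow> int" where
  "unitv j c = (\<lambda>i. if i = j then c else 0)"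

definition autB :: "nat \<Rightarrow> zaut" where
  "autB k = (| states = {0}, alpha = {..<2 * Suc k},
     delta = (\<lambda>q s. if q = 0 then (case s of None \<Rightarrow> {}
        | Some a \<Rightarrow> if a < Suc k then {(0, unitv a 1)}
                   else if a < 2 * Suc k then {(0, unitv (a - Suc k) (-1))} else {}) else {}),
     init = 0, acc = {0} |)"

definition gB :: "nat \<Rightarrow> nat list \<Rightarrow> nat \<Rightarrow> int" where
  "gB k w = (\<lambda>i. if i < Suc k then int (count_list w i) - int (count_list w (Suc k + i)) else 0)"

lemma gB_Cons:
  "a < 2 * Suc k \<Longrightarrow> gB k (a # w) i = gB k w i +
     (if a < Suc k then unitv a 1 i else unitv (a - Suc k) (-1) i)"
  by (auto simp: gB_def unitv_def)

lemma runB: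
  "run (autB k) q x w q' y t \<Longrightarrow> q = 0 \<Longrightarrow>
     q' = 0 \<and> t = length w \<and> set w \<subseteq> {..<2 * Suc k} \<and> y = (\<lambda>i. x i + gB k w i)"
proof (induction rule: run.induct)
  case (run_nil q x)
  then show ?case by (simp add: gB_def fun_eq_iff)
next
  case (run_read p m q a x w q' y t)
  have a: "a < 2 * Suc k" and p: "p = 0"
    and m: "m = (if a < Suc k then unitv a 1 else unitv (a - Suc k) (-1))"
    using run_read(1,4) by (auto simp: autB_def split: if_splits)
  show ?case using run_read(3)[OF p] a
    by (auto simp: m gB_Cons vadd_def)
next
  case (run_eps p m q x w q' y t)
  then show ?case by (simp add: autB_def)
qed

lemma runB2:
  "set w \<subseteq> {..<2 * Suc k} \<Longrightarrow> run (autB k) 0 x w 0 (\<lambda>i. x i + gB k w i) (length w)"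
proof (induction w arbitrary: x)
  case Nil
  have "(\<lambda>i. x i + gB k [] i) = x" by (simp add: gB_def fun_eq_iff)
  then show ?case using run_nil[of "autB k" 0 x] by simp
next
  case (Cons a w)
  define m where "m = (if a < Suc k then unitv a 1 else unitv (a - Suc k) (-1))"
  have a: "a < 2 * Suc k" using Cons by simp
  have d: "(0, m) \<in> delta (autB k) 0 (Some a)" using a by (simp add: autB_def m_def)
  have r: "run (autB k) 0 (vadd x m) w 0 (\<lambda>i. vadd x m i + gB k w i) (length w)"
    using Cons by simp
  have e: "(\<lambda>i. vadd x m i + gB k w i) = (\<lambda>i. x i + gB k (a # w) i)"
    using a by (auto simp: gB_Cons vadd_def m_def)
  show ?case using run_read[OF d r] e by simp
qed

lemma langB: "w \<in> lang (autB k) \<longleftrightarrow> set w \<subseteq> {..<2 * Suc k} \<and> (\<forall>i. gB k w i = 0)"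
proof
  assume "w \<in> lang (autB k)"
  then obtain q t where "q \<in> acc (autB k)" "run (autB k) 0 vzero w q vzero t"
    by (auto simp: lang_def accepts_in_def autB_def)
  from runB[OF this(2)] show "set w \<subseteq> {..<2 * Suc k} \<and> (\<forall>i. gB k w i = 0)"
    by (auto simp: vzero_def fun_eq_iff)
next
  assume "set w \<subseteq> {..<2 * Suc k} \<and> (\<forall>i. gB k w i = 0)"
  then show "w \<in> lang (autB k)"
    using runB2[of w k vzero]
    by (auto simp: lang_def accepts_in_def autB_def vzero_def)
qed

lemma autB_time: "weakly_time_bounded (autB k) (\<lambda>n. n)"
  unfolding weakly_time_bounded_def lang_def accepts_in_def
  using runB by (fastforce simp: autB_def)

lemma autB_aut: "is_Zk_automaton (Suc k) (autB k)"
  unfolding is_Zk_automaton_def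
  by (auto simp: autB_def Zvec_def unitv_def split: option.splits if_splits)


fun enc :: "nat \<Rightarrow> nat list \<Rightarrow> nat list" where
  "enc b [] = []"
| "enc b (x # xs) = replicate x b @ enc (Suc b) xs"

lemma count_replicate: "count_list (replicate x b) j = (if b = j then x else 0)"
  by (induction x) auto

lemma enc_count:
  "count_list (enc b xs) j = (if b \<le> j \<and> j < b + length xs then xs ! (j - b) else 0)"
proof (induction xs arbitrary: b)
  case Nil
  then show ?case by simp
next
  case (Cons x xs)
  show ?case
    by (auto simp: count_replicate Cons nth_Cons' Suc_diff_Suc)
qed

lemma enc_set: "set (enc b xs) \<subseteq> {b..<b + length xs}"
  by (induction xs arbitrary: b) fastforce+

lemma enc_len: "length (enc b xs) = sum_list xs"
  by (induction xs arbitrary: b) auto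

lemma gB_enc:
  assumes "length xs = Suc k" "length ys = Suc k" "i < Suc k"
  shows "gB k (enc 0 xs @ enc (Suc k) ys) i = int (xs ! i) - int (ys ! i)"
  using assms by (simp add: gB_def enc_count)

lemma enc_set2:
  assumes "length xs = Suc k" "length ys = Suc k"
  shows "set (enc 0 xs @ enc (Suc k) ys) \<subseteq> {..<2 * Suc k}"
  using enc_set[of 0 xs] enc_set[of "Suc k" ys] assms by auto

lemma word_in:
  assumes "length xs = Suc k"
  shows "enc 0 xs @ enc (Suc k) xs \<in> lang (autB k)"
  unfolding langB using enc_set2[OF assms assms] gB_enc[OF assms assms]
  by (auto simp: gB_def)

lemma word_eq:
  assumes "length xs = Suc k" "length ys = Suc k"
    and "enc 0 xs @ enc (Suc k) ys \<in> lang (autB k)"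
  shows "xs = ys"
proof (rule nth_equalityI)
  show "length xs = length ys" using assms by simp
  fix i assume "i < length xs"
  then have "i < Suc k" using assms by simp
  then show "xs ! i = ys ! i"
    using assms(3) gB_enc[OF assms(1,2) \<open>i < Suc k\<close>] unfolding langB by auto
qed


lemma sum_list_le_bound:
  fixes xs :: "nat list"
  shows "(\<And>x. x \<in> set xs \<Longrightarrow> x \<le> n) \<Longrightarrow> sum_list xs \<le> length xs * n"
  by (induction xs) (auto simp: add_mono)

lemma arith_final:
  fixes Qn D n :: nat
  assumes "n = Qn * D ^ k"
  shows "Qn * (D * (n + 1)) ^ k < (n + 1) ^ Suc k"
proof -
  have "Qn * (D * (n + 1)) ^ k = (Qn * D ^ k) * (n + 1) ^ k"
    by (simp only: power_mult_distrib mult.assoc)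
  also have "\<dots> = n * (n + 1) ^ k" using assms by simp
  also have "\<dots> < (n + 1) * (n + 1) ^ k" by simp
  finally show ?thesis by simp
qed

lemma not_in_k:
  assumes A: "is_Zk_automaton k A" and L: "lang A = lang (autB k)"
    and fN: "\<forall>n\<ge>N. f n \<le> c * n" and wt: "weakly_time_bounded A f"
  shows False
proof -
  define T where "T = (\<Union>q\<in>states A. \<Union>s\<in>insert None (Some ` alpha A). delta A q s)"
  have finT: "finite T" using A unfolding T_def is_Zk_automaton_def by auto
  have inT: "(p, m) \<in> T" if "(p, m) \<in> delta A q s" for p m q s
  proof -
    have "q \<in> states A" using A that unfolding is_Zk_automaton_def by (metis empty_iff)
    moreover have "s \<in> insert None (Some ` alpha A)"
      using A that unfolding is_Zk_automaton_def
      by (metis empty_iff image_eqI insertCI option.exhaust)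
    ultimately show ?thesis using that unfolding T_def by blast
  qed
  have inZ: "m \<in> Zvec k" if "(p, m) \<in> delta A q s" for p m q s
    using A that unfolding is_Zk_automaton_def by blast
  define M where "M = (\<Sum>pm\<in>T. \<Sum>i<k. nat \<bar>snd pm i\<bar>)"
  have Mb: "\<bar>m i\<bar> \<le> int M" if "(p, m) \<in> delta A q s" for p m q s i
  proof (cases "i < k")
    case True
    have "nat \<bar>m i\<bar> \<le> (\<Sum>i<k. nat \<bar>m i\<bar>)"
      using True by (intro member_le_sum) auto
    also have "\<dots> = (\<lambda>pm. \<Sum>i<k. nat \<bar>snd pm i\<bar>) (p, m)" by simp
    also have "\<dots> \<le> M" unfolding M_def
      by (rule member_le_sum[OF inT[OF that] _ finT]) simp
    finally show ?thesis by simp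
  next
    case False
    then show ?thesis using inZ[OF that] by (simp add: Zvec_def)
  qed
  define F where "F = (\<Sum>m<N. f m)"
  have fb: "f m \<le> c * m + F" for m
  proof (cases "m < N")
    case True
    then have "f m \<le> F" unfolding F_def by (intro member_le_sum) auto
    then show ?thesis by simp
  next
    case False
    then show ?thesis using fN by (simp add: trans_le_add1)
  qed
  define D where "D = 4 * M * c * Suc k + 2 * M * F + 1"
  define n where "n = card (states A) * D ^ k"
  define B where "B = M * (c * (2 * Suc k * n) + F)"
  define X where "X = {xs. set xs \<subseteq> {0..n} \<and> length xs = Suc k}"
  define YS where "YS = {ys. set ys \<subseteq> {- int B..int B} \<and> length ys = k}"
  define Y where "Y = states A \<times> YS"
  define P where "P xs qy \<longleftrightarrow> fst qy \<in> states A \<and> snd qy \<in> YS \<and>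
     (\<exists>y t1 qf t2. y \<in> Zvec k \<and> map y [0..<k] = snd qy \<and>
        run A (init A) vzero (enc 0 xs) (fst qy) y t1 \<and> qf \<in> acc A \<and>
        run A (fst qy) y (enc (Suc k) xs) qf vzero t2)" for xs qy
  have ex: "\<forall>xs\<in>X. \<exists>qy. P xs qy"
  proof
    fix xs assume xs: "xs \<in> X"
    have len: "length xs = Suc k" using xs X_def by simp
    define w where "w = enc 0 xs @ enc (Suc k) xs"
    have "w \<in> lang A" using word_in[OF len] L w_def by simp
    then obtain t where t: "t \<le> f (length w)" "accepts_in A w t"
      using wt unfolding weakly_time_bounded_def by blast
    then obtain qf where qf: "qf \<in> acc A" "run A (init A) vzero w qf vzero t"
      unfolding accepts_in_def by blast
    then obtain q y t1 t2 where r: "run A (init A) vzero (enc 0 xs) q y t1"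
      "run A q y (enc (Suc k) xs) qf vzero t2" "t = t1 + t2"
      using run_split w_def by blast
    have yZ: "y \<in> Zvec k"
      using run_zvec[OF inZ r(1)] by (simp add: Zvec_def vzero_def)
    have qS: "q \<in> states A" using run_states[OF A r(1)] A unfolding is_Zk_automaton_def by blast
    have sl: "sum_list xs \<le> Suc k * n"
    proof -
      have "sum_list xs \<le> length xs * n"
        using xs unfolding X_def by (intro sum_list_le_bound) auto
      then show ?thesis using len by simp
    qed
    have lw: "length w = 2 * sum_list xs" by (simp add: w_def enc_len)
    have "t1 \<le> c * (2 * Suc k * n) + F"
    proof -
      have "t1 \<le> f (length w)" using t r(3) by simp
      also have "\<dots> \<le> c * length w + F" by (rule fb)
      also have "\<dots> \<le> c * (2 * Suc k * n) + F" using lw sl by simp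
      finally show ?thesis .
    qed
    then have "M * t1 \<le> B" unfolding B_def by simp
    have rb: "\<bar>y i - vzero i\<bar> \<le> int M * int t1" for i
      by (rule run_bound[OF _ r(1)]) (rule Mb)
    then have yb: "\<bar>y i\<bar> \<le> int B" for i
      using rb[of i] \<open>M * t1 \<le> B\<close> by (simp add: vzero_def)
        (metis of_nat_le_iff of_nat_mult order.trans)
    have "map y [0..<k] \<in> YS" unfolding YS_def using yb by (force simp: abs_le_iff)
    then have "P xs (q, map y [0..<k])"
      unfolding P_def using qS yZ r qf by auto
    then show "\<exists>qy. P xs qy" by blast
  qed
  then obtain \<phi> where \<phi>: "\<forall>xs\<in>X. P xs (\<phi> xs)" by (metis bchoice)
  have sub: "\<phi> ` X \<subseteq> Y"
  proof
    fix z assume "z \<in> \<phi> ` X"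
    then obtain xs where "xs \<in> X" "z = \<phi> xs" by blast
    then show "z \<in> Y" using \<phi> unfolding P_def Y_def by (simp add: mem_Times_iff)
  qed
  have inj: "inj_on \<phi> X"
  proof
    fix xs xs' assume xs: "xs \<in> X" and xs': "xs' \<in> X" and eq: "\<phi> xs = \<phi> xs'"
    obtain y t1 where y: "y \<in> Zvec k" "map y [0..<k] = snd (\<phi> xs)"
      "run A (init A) vzero (enc 0 xs) (fst (\<phi> xs)) y t1"
      using \<phi> xs unfolding P_def by blast
    obtain y' qf t2 where y': "y' \<in> Zvec k" "map y' [0..<k] = snd (\<phi> xs')" "qf \<in> acc A"
      "run A (fst (\<phi> xs')) y' (enc (Suc k) xs') qf vzero t2"
      using \<phi> xs' unfolding P_def by blast
    have "y = y'"
    proof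
      fix i show "y i = y' i"
      proof (cases "i < k")
        case True
        then show ?thesis using y(2) y'(2) eq
          by (metis add_0 diff_zero nth_map_upt)
      next
        case False
        then show ?thesis using y(1) y'(1) by (simp add: Zvec_def)
      qed
    qed
    then have "run A (init A) vzero (enc 0 xs @ enc (Suc k) xs') qf vzero (t1 + t2)"
      using run_append[OF y(3)] y'(4) eq by simp
    then have "enc 0 xs @ enc (Suc k) xs' \<in> lang A"
      using y'(3) unfolding lang_def accepts_in_def by blast
    then show "xs = xs'" using word_eq xs xs' L unfolding X_def by simp
  qed
  have finS: "finite (states A)" using A unfolding is_Zk_automaton_def by blast
  have finYS: "finite YS" unfolding YS_def by (intro finite_lists_length_eq) auto
  have "card X \<le> card Y"
    using card_inj_on_le[OF inj sub] finS finYS unfolding Y_def by simp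
  moreover have "card X = (n + 1) ^ Suc k"
    unfolding X_def by (subst card_lists_length_eq) auto
  moreover have "card Y = card (states A) * (2 * B + 1) ^ k"
  proof -
    have "card {- int B..int B} = 2 * B + 1" by simp
    then show ?thesis unfolding Y_def YS_def card_cartesian_product
      by (subst card_lists_length_eq) auto
  qed
  moreover have "2 * B + 1 \<le> D * (n + 1)"
    unfolding B_def D_def by (simp add: algebra_simps)
  ultimately have "(n + 1) ^ Suc k \<le> card (states A) * (D * (n + 1)) ^ k"
    by (metis (no_types, lifting) le_trans mult_le_mono2 power_mono zero_le)
  then show False using arith_final[OF n_def] by simp
qed


lemma Zk_mono: "is_Zk_automaton k A \<Longrightarrow> is_Zk_automaton (k + 1) A"
proof -
  have z: "Zvec k \<subseteq> Zvec (k + 1)" unfolding Zvec_def by auto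
  assume "is_Zk_automaton k A"
  then show ?thesis unfolding is_Zk_automaton_def using z
    by (meson Sigma_mono order_refl subset_trans)
qed

theorem theorem4p11:
  fixes k :: nat
  assumes "k \<ge> 1"
  shows "ZkLinLangs k \<subset> ZkLinLangs (k + 1)"
proof
  show "ZkLinLangs k \<subseteq> ZkLinLangs (k + 1)"
  proof
    fix L assume "L \<in> ZkLinLangs k"
    then obtain A f c N where "is_Zk_automaton k A" "lang A = L" "\<forall>n\<ge>N. f n \<le> c * n"
      "weakly_time_bounded A f" unfolding ZkLinLangs_def by blast
    then have "is_Zk_automaton (k + 1) A \<and> lang A = L \<and> (\<exists>c N. \<forall>n\<ge>N. f n \<le> c * n) \<and>
      weakly_time_bounded A f" using Zk_mono by blast
    then show "L \<in> ZkLinLangs (k + 1)" unfolding ZkLinLangs_def by blast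
  qed
  have "lang (autB k) \<in> ZkLinLangs (k + 1)"
  proof -
    have "is_Zk_automaton (k + 1) (autB k) \<and> lang (autB k) = lang (autB k) \<and>
      (\<exists>c N. \<forall>n\<ge>N. (\<lambda>n::nat. n) n \<le> c * n) \<and> weakly_time_bounded (autB k) (\<lambda>n. n)"
    proof (intro conjI)
      show "is_Zk_automaton (k + 1) (autB k)" using autB_aut[of k] by simp
      show "lang (autB k) = lang (autB k)" by (rule refl)
      show "\<exists>c N. \<forall>n\<ge>N. (\<lambda>n::nat. n) n \<le> c * n"
        by (rule exI[of _ 1], rule exI[of _ 0]) simp
      show "weakly_time_bounded (autB k) (\<lambda>n. n)" by (rule autB_time)
    qed
    then show ?thesis unfolding ZkLinLangs_def
      by (intro CollectI exI[of _ "autB k"] exI[of _ "\<lambda>n::nat. n"])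
  qed
  moreover have "lang (autB k) \<notin> ZkLinLangs k"
  proof
    assume "lang (autB k) \<in> ZkLinLangs k"
    then obtain A f c N where "is_Zk_automaton k A" "lang A = lang (autB k)"
      "\<forall>n\<ge>N. f n \<le> c * n" "weakly_time_bounded A f" unfolding ZkLinLangs_def by blast
    then show False by (rule not_in_k)
  qed
  ultimately show "ZkLinLangs k \<noteq> ZkLinLangs (k + 1)" by blast
qed

end
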